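(* Let $D$ be a strongly connected digraph, $T$ a DFS tree of $D$ rooted at $r$, and $H$ a connected subdigraph of $T$. Let $G_H$ be the undirected graph with vertex set $V(H)$ in which $uv$ is an edge whenever $D$ has a backward arc (with respect to $T$) from $u$ to $v$ or from $v$ to $u$. Then $\chi_A(D\langle V(H)\rangle)\le \chi(G_H)$.
   Context: Digraphs are finite and loopless; paths and cycles are directed. $D\langle U\rangle$ denotes the subdigraph of $D$ induced by $U\subseteq V(D)$. $\chi$ is the usual chromatic number of an undirected graph. A set of vertices is acyclic if it induces no directed cycle; $\chi_A$ is the minimum number of colors in a coloring whose color classes are all acyclic. A DFS tree $T$ of a strongly connected digraph $D$ rooted at $r$ is the spanning out-branching of $D$ produced by a depth-first search of $D$ started at $r$. A vertex $v$ is a descendant of $u$ (and $u$ an ancestor of $v$) if $T$ contains a directed $uv$-path. An arc $(u,v)$ of $D$ is a backward arc if $u$ is a descendant of $v$. *)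

theory Defs
  imports Main
begin

definition digraph :: "'a set \<Rightarrow> ('a \<times> 'a) set \<Rightarrow> bool" where
  "digraph V A \<longleftrightarrow> finite V \<and> A \<subseteq> V \<times> V \<and> (\<forall>v. (v, v) \<notin> A)"

definition strongly_connected :: "'a set \<Rightarrow> ('a \<times> 'a) set \<Rightarrow> bool" where
  "strongly_connected V A \<longleftrightarrow> V \<noteq> {} \<and> (\<forall>u\<in>V. \<forall>v\<in>V. (u, v) \<in> A\<^sup>*)"

text \<open>Depth-first search, with arbitrary (nondeterministic) choice of the next
  unvisited out-neighbour.  dfs_visit A u W T W' T' means: the recursive call
  visiting u, started with visited set W and tree-arc set T, may terminate with
  visited set W' and tree-arc set T'.\<close>

inductive dfs_visit :: "('a \<times> 'a) set \<Rightarrow> 'a \<Rightarrow> 'a set \<Rightarrow> ('a \<times> 'a) set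
    \<Rightarrow> 'a set \<Rightarrow> ('a \<times> 'a) set \<Rightarrow> bool" for A where
  finish: "(\<forall>v. (u, v) \<in> A \<longrightarrow> v \<in> W) \<Longrightarrow> dfs_visit A u W T W T"
| descend: "\<lbrakk> (u, v) \<in> A; v \<notin> W;
             dfs_visit A v (insert v W) (insert (u, v) T) W1 T1;
             dfs_visit A u W1 T1 W2 T2 \<rbrakk>
           \<Longrightarrow> dfs_visit A u W T W2 T2"

definition dfs_tree :: "'a set \<Rightarrow> ('a \<times> 'a) set \<Rightarrow> 'a \<Rightarrow> ('a \<times> 'a) set \<Rightarrow> bool" where
  "dfs_tree V A r T \<longleftrightarrow> r \<in> V \<and> (\<exists>W. dfs_visit A r {r} {} W T)"

definition descendant :: "('a \<times> 'a) set \<Rightarrow> 'a \<Rightarrow> 'a \<Rightarrow> bool" where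
  "descendant T v u \<longleftrightarrow> (u, v) \<in> T\<^sup>*"

definition backward_arc :: "('a \<times> 'a) set \<Rightarrow> ('a \<times> 'a) set \<Rightarrow> 'a \<Rightarrow> 'a \<Rightarrow> bool" where
  "backward_arc A T u v \<longleftrightarrow> (u, v) \<in> A \<and> descendant T u v"

definition connected_subdigraph ::
  "'a set \<Rightarrow> ('a \<times> 'a) set \<Rightarrow> 'a set \<Rightarrow> ('a \<times> 'a) set \<Rightarrow> bool" where
  "connected_subdigraph V T VH AH \<longleftrightarrow>
     VH \<subseteq> V \<and> AH \<subseteq> T \<and> AH \<subseteq> VH \<times> VH \<and> VH \<noteq> {} \<and>
     (\<forall>u\<in>VH. \<forall>v\<in>VH. (u, v) \<in> (AH \<union> AH\<inverse>)\<^sup>*)"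

definition proper_coloring :: "'a set \<Rightarrow> ('a \<Rightarrow> 'a \<Rightarrow> bool) \<Rightarrow> nat \<Rightarrow> ('a \<Rightarrow> nat) \<Rightarrow> bool" where
  "proper_coloring S E k c \<longleftrightarrow> (\<forall>v\<in>S. c v < k) \<and>
     (\<forall>u\<in>S. \<forall>v\<in>S. E u v \<longrightarrow> c u \<noteq> c v)"

definition chromatic_number :: "'a set \<Rightarrow> ('a \<Rightarrow> 'a \<Rightarrow> bool) \<Rightarrow> nat" where
  "chromatic_number S E = (LEAST k. \<exists>c. proper_coloring S E k c)"

text \<open>Induced subdigraph D<U> has arcs A \<inter> U \<times> U. A vertex set U is acyclic
  in D if D<U> has no directed cycle.\<close>

definition acyclic_set :: "('a \<times> 'a) set \<Rightarrow> 'a set \<Rightarrow> bool" where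
  "acyclic_set A U \<longleftrightarrow> acyclic (A \<inter> U \<times> U)"

definition acyclic_coloring :: "'a set \<Rightarrow> ('a \<times> 'a) set \<Rightarrow> nat \<Rightarrow> ('a \<Rightarrow> nat) \<Rightarrow> bool" where
  "acyclic_coloring U A k c \<longleftrightarrow> (\<forall>v\<in>U. c v < k) \<and>
     (\<forall>i<k. acyclic_set A {v\<in>U. c v = i})"

definition dichromatic_number :: "'a set \<Rightarrow> ('a \<times> 'a) set \<Rightarrow> nat" where
  "dichromatic_number U A = (LEAST k. \<exists>c. acyclic_coloring U (A \<inter> U \<times> U) k c)"

end

theory Submission
  imports Defs
begin

definition before :: "'a list \<Rightarrow> 'a \<Rightarrow> 'a \<Rightarrow> bool" where
  "before L y x \<longleftrightarrow> (\<exists>i j. i < j \<and> j < length L \<and> L!i = y \<and> L!j = x)"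

lemma before_appR: "before L y x \<Longrightarrow> before (L @ M) y x"
  unfolding before_def
proof (elim exE conjE)
  fix i j assume "i < j" "j < length L" "L ! i = y" "L ! j = x"
  then show "\<exists>i j. i < j \<and> j < length (L @ M) \<and> (L @ M) ! i = y \<and> (L @ M) ! j = x"
    by (intro exI[of _ "i"] exI[of _ "j"]) (auto simp: nth_append)
qed

lemma before_appL: "before M y x \<Longrightarrow> before (L @ M) y x"
  unfolding before_def
proof (elim exE conjE)
  fix i j assume "i < j" "j < length M" "M ! i = y" "M ! j = x"
  then show "\<exists>i j. i < j \<and> j < length (L @ M) \<and> (L @ M) ! i = y \<and> (L @ M) ! j = x"
    by (intro exI[of _ "length L + i"] exI[of _ "length L + j"]) (auto simp: nth_append)
qed

lemma before_mid: "y \<in> set L \<Longrightarrow> x \<in> set M \<Longrightarrow> before (L @ M) y x"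
  unfolding before_def
proof -
  assume "y \<in> set L" "x \<in> set M"
  then obtain i j where "i < length L" "L!i = y" "j < length M" "M!j = x"
    by (auto simp: in_set_conv_nth)
  then show "\<exists>i j. i < j \<and> j < length (L @ M) \<and> (L @ M) ! i = y \<and> (L @ M) ! j = x"
    by (intro exI[of _ "i"] exI[of _ "length L + j"]) (auto simp: nth_append)
qed

lemma before_trans: "distinct L \<Longrightarrow> before L x y \<Longrightarrow> before L y z \<Longrightarrow> before L x z"
  unfolding before_def
proof (elim exE conjE)
  fix i j i' j' assume d: "distinct L" and a: "i < j" "j < length L" "L ! i = x" "L ! j = y"
    and b: "i' < j'" "j' < length L" "L ! i' = y" "L ! j' = z"
  have "j = i'" using d a b nth_eq_iff_index_eq[OF d, of j i'] by simp
  then show "\<exists>i j. i < j \<and> j < length L \<and> L ! i = x \<and> L ! j = z"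
    using a b by (intro exI[of _ i] exI[of _ j']) simp
qed

lemma before_irrefl: "distinct L \<Longrightarrow> \<not> before L x x"
  unfolding before_def
proof
  assume d: "distinct L" and "\<exists>i j. i < j \<and> j < length L \<and> L ! i = x \<and> L ! j = x"
  then obtain i j where "i < j" "j < length L" "L ! i = x" "L ! j = x" by blast
  then show False using nth_eq_iff_index_eq[OF d, of i j] by simp
qed

lemma dfs_inv:
  assumes "dfs_visit A u W T W' T'"
  shows "\<exists>L. distinct L \<and> set L = W' - W \<and> W \<subseteq> W' \<and> T \<subseteq> T'
    \<and> (\<forall>x\<in>set L. (u,x) \<in> T'\<^sup>*) \<and> (\<forall>y. (u,y) \<in> A \<longrightarrow> y \<in> W')
    \<and> (\<forall>x\<in>set L. \<forall>y. (x,y) \<in> A \<longrightarrow> y \<in> W' \<and> (y \<in> W \<or> before L y x \<or> (y,x) \<in> T'\<^sup>*))"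
  using assms
proof induction
  case (finish u W T)
  then show ?case by (intro exI[of _ "[]"]) auto
next
  case (descend u v W T W1 T1 W2 T2)
  from descend.IH(1) obtain L1 where L1: "distinct L1" "set L1 = W1 - insert v W"
    "insert v W \<subseteq> W1" "insert (u,v) T \<subseteq> T1" "\<forall>x\<in>set L1. (v,x) \<in> T1\<^sup>*"
    "\<forall>y. (v,y) \<in> A \<longrightarrow> y \<in> W1"
    "\<forall>x\<in>set L1. \<forall>y. (x,y) \<in> A \<longrightarrow> y \<in> W1 \<and> (y \<in> insert v W \<or> before L1 y x \<or> (y,x) \<in> T1\<^sup>*)"
    by blast
  from descend.IH(2) obtain L2 where L2: "distinct L2" "set L2 = W2 - W1"
    "W1 \<subseteq> W2" "T1 \<subseteq> T2" "\<forall>x\<in>set L2. (u,x) \<in> T2\<^sup>*"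
    "\<forall>y. (u,y) \<in> A \<longrightarrow> y \<in> W2"
    "\<forall>x\<in>set L2. \<forall>y. (x,y) \<in> A \<longrightarrow> y \<in> W2 \<and> (y \<in> W1 \<or> before L2 y x \<or> (y,x) \<in> T2\<^sup>*)"
    by blast
  define L where "L = L1 @ v # L2"
  have T12: "T1\<^sup>* \<subseteq> T2\<^sup>*" using L2(4) by (rule rtrancl_mono)
  have uv: "(u,v) \<in> T2" using L1(4) L2(4) by auto
  have n1: "v \<notin> set L1" using L1(2) by blast
  have n2: "v \<notin> set L2" using L2(2) L1(3) by blast
  have n3: "set L1 \<inter> set L2 = {}" using L1(2) L2(2) by blast
  have dist: "distinct L" unfolding L_def using L1(1) L2(1) n1 n2 n3 by simp
  have sL: "set L = set L1 \<union> insert v (set L2)" unfolding L_def by simp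
  have setL: "set L = W2 - W" unfolding sL L1(2) L2(2) using L1(3) L2(3) descend.hyps(2) by blast
  have desc: "\<forall>x\<in>set L. (u,x) \<in> T2\<^sup>*"
  proof
    fix x assume "x \<in> set L"
    then consider "x \<in> set L1" | "x = v" | "x \<in> set L2" unfolding L_def by auto
    then show "(u,x) \<in> T2\<^sup>*"
    proof cases
      case 1 then have "(v,x) \<in> T2\<^sup>*" using L1(5) T12 by blast
      then show ?thesis using uv by (meson converse_rtrancl_into_rtrancl)
    next
      case 2 then show ?thesis using uv by auto
    next
      case 3 then show ?thesis using L2(5) by blast
    qed
  qed
  have arcs: "\<forall>x\<in>set L. \<forall>y. (x,y) \<in> A \<longrightarrow> y \<in> W2 \<and> (y \<in> W \<or> before L y x \<or> (y,x) \<in> T2\<^sup>*)"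
  proof (intro ballI allI impI)
    fix x y assume x: "x \<in> set L" and xy: "(x,y) \<in> A"
    from x consider "x \<in> set L1" | "x = v" | "x \<in> set L2" unfolding L_def by auto
    then show "y \<in> W2 \<and> (y \<in> W \<or> before L y x \<or> (y,x) \<in> T2\<^sup>*)"
    proof cases
      case 1
      with L1(7) xy have a: "y \<in> W1" and b: "y \<in> insert v W \<or> before L1 y x \<or> (y,x) \<in> T1\<^sup>*"
        by blast+
      have "y \<in> W2" using a L2(3) by blast
      moreover have "y \<in> W \<or> before L y x \<or> (y,x) \<in> T2\<^sup>*"
      proof -
        { assume "y = v" then have ?thesis using 1 L1(5) T12 by blast }
        moreover { assume "before L1 y x" then have "before L y x" unfolding L_def
            by (rule before_appR) }
        moreover { assume "(y,x) \<in> T1\<^sup>*" then have "(y,x) \<in> T2\<^sup>*" using T12 by blast }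
        ultimately show ?thesis using b by blast
      qed
      ultimately show ?thesis by blast
    next
      case 2
      with L1(6) xy have a: "y \<in> W1" by blast
      have "y \<in> W2" using a L2(3) by blast
      moreover have "y \<in> W \<or> before L y x \<or> (y,x) \<in> T2\<^sup>*"
      proof -
        have "y \<in> W \<or> y = v \<or> y \<in> set L1" using a L1(2) by blast
        moreover { assume "y \<in> set L1" then have "before L y x" unfolding L_def using 2
            by (intro before_mid) auto }
        ultimately show ?thesis using 2 by blast
      qed
      ultimately show ?thesis by blast
    next
      case 3
      with L2(7) xy have a: "y \<in> W2" and b: "y \<in> W1 \<or> before L2 y x \<or> (y,x) \<in> T2\<^sup>*"
        by blast+
      have "y \<in> W1 \<Longrightarrow> y \<in> W \<or> y = v \<or> y \<in> set L1" using L1(2) by blast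
      moreover { assume "y = v \<or> y \<in> set L1"
        then have "before ((L1 @ [v]) @ L2) y x" using 3 by (intro before_mid) auto
        then have "before L y x" unfolding L_def by simp }
      moreover { assume "before L2 y x"
        then have "before ((L1 @ [v]) @ L2) y x" by (rule before_appL)
        then have "before L y x" unfolding L_def by simp }
      ultimately show ?thesis using a b by blast
    qed
  qed
  show ?case
    apply (rule exI[of _ L])
    using dist setL desc arcs L1(3,4) L2(3,4,6) by blast
qed

theorem mainTheorem5:
  fixes V :: "'a set" and A T AH :: "('a \<times> 'a) set" and r :: 'a and VH :: "'a set"
  assumes "digraph V A"
    and "strongly_connected V A"
    and "dfs_tree V A r T"
    and "connected_subdigraph V T VH AH"
  shows "dichromatic_number VH A \<le>
         chromatic_number VH (\<lambda>u v. backward_arc A T u v \<or> backward_arc A T v u)"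
proof -
  define E where "E = (\<lambda>u v. backward_arc A T u v \<or> backward_arc A T v u)"
  have dg0: "finite V \<and> A \<subseteq> V \<times> V \<and> (\<forall>v. (v,v) \<notin> A)" using assms(1) unfolding digraph_def .
  have dg: "finite V" "A \<subseteq> V \<times> V" "\<And>v. (v,v) \<notin> A" using dg0 by blast+
  have VH: "VH \<subseteq> V" using assms(4) unfolding connected_subdigraph_def by auto
  obtain W where rV: "r \<in> V" and dfs: "dfs_visit A r {r} {} W T"
    using assms(3) unfolding dfs_tree_def by auto
  from dfs_inv[OF dfs] obtain L where L: "distinct L" "set L = W - {r}" "{r} \<subseteq> W"
    "\<forall>x\<in>set L. (r,x) \<in> T\<^sup>*" "\<forall>y. (r,y) \<in> A \<longrightarrow> y \<in> W"
    "\<forall>x\<in>set L. \<forall>y. (x,y) \<in> A \<longrightarrow> y \<in> W \<and> (y \<in> {r} \<or> before L y x \<or> (y,x) \<in> T\<^sup>*)"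
    by blast
  define L0 where "L0 = L @ [r]"
  have rL: "r \<notin> set L" using L(2) by blast
  have d0: "distinct L0" unfolding L0_def using L(1) rL by simp
  have Wc: "\<And>x y. x \<in> W \<Longrightarrow> (x,y) \<in> A \<Longrightarrow> y \<in> W"
  proof -
    fix x y assume "x \<in> W" "(x,y) \<in> A"
    show "y \<in> W"
    proof (cases "x = r")
      case True then show ?thesis using L(5) \<open>(x,y) \<in> A\<close> by blast
    next
      case False then have "x \<in> set L" using L(2) \<open>x \<in> W\<close> by blast
      then show ?thesis using L(6) \<open>(x,y) \<in> A\<close> by blast
    qed
  qed
  have VW: "V \<subseteq> W"
  proof
    fix v assume "v \<in> V"
    then have "(r,v) \<in> A\<^sup>*" using assms(2) rV unfolding strongly_connected_def by blast
    then show "v \<in> W"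
    proof induction
      case base then show ?case using L(3) by auto
    next
      case (step y z) then show ?case using Wc by blast
    qed
  qed
  have key: "\<And>x y. (x,y) \<in> A \<Longrightarrow> \<not> (y,x) \<in> T\<^sup>* \<Longrightarrow> before L0 y x"
  proof -
    fix x y assume xy: "(x,y) \<in> A" and nb: "\<not> (y,x) \<in> T\<^sup>*"
    have xW: "x \<in> W" using xy dg(2) VW by blast
    show "before L0 y x"
    proof (cases "x = r")
      case True
      then have "y \<in> W" "y \<noteq> r" using L(5) xy dg(3) by auto
      then have "y \<in> set L" using L(2) by auto
      then show ?thesis unfolding L0_def using True by (intro before_mid) auto
    next
      case False
      then have xL: "x \<in> set L" using xW L(2) by auto
      then have "y \<in> {r} \<or> before L y x \<or> (y,x) \<in> T\<^sup>*" using L(6) xy by blast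
      moreover have "y \<noteq> r" using nb L(4) xL by blast
      ultimately have "before L y x" using nb by blast
      then show ?thesis unfolding L0_def by (rule before_appR)
    qed
  qed
  have fin: "finite VH" using VH dg(1) finite_subset by blast
  obtain h where h: "bij_betw h VH {0..<card VH}" using ex_bij_betw_finite_nat[OF fin] by blast
  have "proper_coloring VH E (card VH) h"
    unfolding proper_coloring_def
  proof (intro conjI ballI impI)
    fix v assume "v \<in> VH" then show "h v < card VH" using h bij_betwE by fastforce
  next
    fix u v assume uv: "u \<in> VH" "v \<in> VH" "E u v"
    then have "u \<noteq> v" unfolding E_def backward_arc_def using dg(3) by auto
    then show "h u \<noteq> h v" using h uv unfolding bij_betw_def inj_on_def by blast
  qed
  then have ex: "\<exists>k c. proper_coloring VH E k c" by blast
  define k where "k = chromatic_number VH E"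
  obtain c where c: "proper_coloring VH E k c"
    unfolding k_def chromatic_number_def using LeastI_ex[OF ex] by blast
  have "acyclic_coloring VH (A \<inter> VH \<times> VH) k c"
    unfolding acyclic_coloring_def
  proof (intro conjI allI impI ballI)
    fix v assume "v \<in> VH" then show "c v < k" using c unfolding proper_coloring_def by blast
  next
    fix i assume "i < k"
    define C where "C = {v \<in> VH. c v = i}"
    define Q where "Q = {(x,y). before L0 y x}"
    have sub: "A \<inter> VH \<times> VH \<inter> C \<times> C \<subseteq> Q"
    proof
      fix p assume p: "p \<in> A \<inter> VH \<times> VH \<inter> C \<times> C"
      obtain x y where pxy: "p = (x,y)" by (cases p)
      have "\<not> (y,x) \<in> T\<^sup>*"
      proof
        assume "(y,x) \<in> T\<^sup>*"
        then have "E x y" using p pxy unfolding E_def backward_arc_def descendant_def by auto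
        moreover have "x \<in> VH" "y \<in> VH" "c x = i" "c y = i" using p pxy unfolding C_def by auto
        ultimately show False using c unfolding proper_coloring_def by metis
      qed
      then show "p \<in> Q" using key p pxy unfolding Q_def by auto
    qed
    have "trans Q" unfolding trans_def Q_def using before_trans[OF d0] by blast
    then have "Q\<^sup>+ = Q" by simp
    then have "(A \<inter> VH \<times> VH \<inter> C \<times> C)\<^sup>+ \<subseteq> Q" using trancl_mono sub by blast
    then show "acyclic_set (A \<inter> VH \<times> VH) C"
      unfolding acyclic_set_def acyclic_def Q_def using before_irrefl[OF d0] by blast
  qed
  then have "dichromatic_number VH A \<le> k"
    unfolding dichromatic_number_def by (intro Least_le exI)
  then show ?thesis unfolding k_def E_def .
qed

end
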